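(* Let $(X,Y)\sim P_{X,Y}$ be random variables taking values in $\mathcal{X}\times\mathcal{Y}$, where $|\mathcal{X}|=2$ and $\mathcal{Y}$ is a finite (discrete) set. For any natural number $L\geq 2$, there exists a random variable $Z$, jointly distributed with $(X,Y)$, taking values in a set $\mathcal{Z}$ of cardinality $|\mathcal{Z}|=L$, such that the joint distribution of $(X,Z,Y)$ has $(X,Y)$-marginal equal to $P_{X,Y}$, $X-Z-Y$ form a Markov chain in this order, and \[ I(X;Z)-I(X;Y)\leq 128\,L^{-2}. \]
   Context: All logarithms (and hence mutual informations) are to the natural base. *)

theory Defs
  imports "HOL-Probability.Probability_Mass_Function"
begin

definition mutual_info :: "('a \<times> 'b) pmf \<Rightarrow> real" where
  "mutual_info p = (\<Sum>ab\<in>set_pmf p.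
      pmf p ab * ln (pmf p ab / (pmf (map_pmf fst p) (fst ab) * pmf (map_pmf snd p) (snd ab))))"

definition markov_chain :: "('x \<times> 'z \<times> 'y) pmf \<Rightarrow> bool" where
  "markov_chain q \<longleftrightarrow> (\<forall>x z y.
      pmf q (x, z, y) * pmf (map_pmf (\<lambda>(x, z, y). z) q) z =
      pmf (map_pmf (\<lambda>(x, z, y). (x, z)) q) (x, z) * pmf (map_pmf (\<lambda>(x, z, y). (z, y)) q) (z, y))"

end

theory Submission
  imports Defs
begin


definition ff :: "real \<Rightarrow> real" where
  "ff t = (if t \<le> 1/2 then 2*t^2 else 1 - 2*(1-t)^2)"

definition finv :: "real \<Rightarrow> real" where
  "finv p = (if p \<le> 1/2 then sqrt (p/2) else 1 - sqrt ((1-p)/2))"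

lemma ff_sym: "ff (1 - v) = 1 - ff v"
  unfolding ff_def by (auto simp: power2_eq_square algebra_simps)

lemma ff_le: "ff v \<le> 2 * v^2"
proof -
  have "0 \<le> (2 * v - 1::real)^2" by (rule zero_le_power2)
  then show ?thesis unfolding ff_def by (auto simp: power2_eq_square algebra_simps)
qed

lemma ff_strict: assumes "0 \<le> u" "u < v" "v \<le> 1" shows "ff u < ff v"
proof (cases "v \<le> 1/2")
  case True
  then show ?thesis using assms unfolding ff_def
    by (auto simp: power2_eq_square intro!: mult_strict_mono)
next
  case False
  show ?thesis
  proof (cases "u \<le> 1/2")
    case True
    have "2*u^2 \<le> 1/2" using True assms
    proof -
      have "u^2 \<le> (1/2)^2" using True assms by (intro power_mono) auto
      then show ?thesis by (simp add: power2_eq_square)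
    qed
    moreover have "1 - 2*(1-v)^2 > 1/2"
    proof -
      have "(1-v)^2 < (1/2)^2" using False assms by (intro power_strict_mono) auto
      then show ?thesis by (simp add: power2_eq_square)
    qed
    ultimately show ?thesis using True False unfolding ff_def by auto
  next
    case F2: False
    have "(1-v)^2 < (1-u)^2" using assms by (intro power_strict_mono) auto
    then show ?thesis using F2 False unfolding ff_def by auto
  qed
qed

lemma ff_mono: assumes "0 \<le> u" "u \<le> v" "v \<le> 1" shows "ff u \<le> ff v"
  using ff_strict[of u v] assms by (cases "u = v") auto

lemma ff_range: assumes "0 \<le> u" "u \<le> 1" shows "0 \<le> ff u" "ff u \<le> 1"
proof -
  have "ff 0 = 0" "ff 1 = 1" unfolding ff_def by auto
  then show "0 \<le> ff u" "ff u \<le> 1" using ff_mono[of 0 u] ff_mono[of u 1] assms by auto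
qed

lemma finv: assumes "0 \<le> p" "p \<le> 1" shows "0 \<le> finv p" "finv p \<le> 1" "ff (finv p) = p"
proof -
  show "0 \<le> finv p" "finv p \<le> 1" using assms unfolding finv_def
    by (auto simp: real_sqrt_le_1_iff)
  show "ff (finv p) = p"
  proof (cases "p \<le> 1/2")
    case True
    have "sqrt (p/2) \<le> 1/2" using True assms
      by (intro real_le_lsqrt) (auto simp: power2_eq_square)
    then show ?thesis using True assms unfolding ff_def finv_def by auto
  next
    case False
    have "sqrt ((1-p)/2) < 1/2" using False assms
      by (intro real_less_lsqrt) (auto simp: power2_eq_square)
    then show ?thesis using False assms unfolding ff_def finv_def by (auto simp: field_simps)
  qed
qed

lemma core_bound:
  fixes t s d p :: real
  assumes "0 \<le> t" "t \<le> s" "s \<le> t + d" "t + d \<le> 1" "s \<le> 1/2" "0 < d" "p = 2 * s^2"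
  shows "(p - ff t) * (ff (t + d) - p) \<le> 16 * d^2 * p"
proof -
  have a: "ff t = 2 * t^2" using assms unfolding ff_def by auto
  have "t + d \<le> s + d" using assms by simp
  hence "(t + d)^2 \<le> (s + d)^2" using assms by (intro power_mono) auto
  hence b1: "ff (t + d) \<le> 2 * (s + d)^2" using ff_le[of "t + d"] by simp
  have fs: "ff s = p" using assms unfolding ff_def by auto
  have b2: "p \<le> ff (t + d)" using ff_mono[of s "t + d"] assms fs by auto
  have "t^2 \<le> s^2" using assms by (intro power_mono) auto
  hence pa: "0 \<le> p - ff t" using a assms by simp
  have bp: "ff (t + d) - p \<le> 4 * s * d + 2 * d^2"
    using b1 assms by (simp add: power2_eq_square algebra_simps)
  show ?thesis
  proof (cases "d \<le> s")
    case True
    have "p - ff t = 2 * (s - t) * (s + t)" using a assms by (simp add: power2_eq_square algebra_simps)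
    also have "\<dots> \<le> 2 * d * (2 * s)" using assms by (intro mult_mono) auto
    finally have 1: "p - ff t \<le> 4 * s * d" by (simp add: mult.commute mult.left_commute)
    have "d * d \<le> s * d" using True assms by (intro mult_right_mono) auto
    hence 2: "ff (t + d) - p \<le> 6 * s * d" using bp by (simp add: power2_eq_square)
    have "(p - ff t) * (ff (t + d) - p) \<le> (4 * s * d) * (6 * s * d)"
      using 1 2 pa b2 assms by (intro mult_mono) auto
    also have "\<dots> = 12 * d^2 * p" using assms by (simp add: power2_eq_square)
    also have "\<dots> \<le> 16 * d^2 * p" using assms by simp
    finally show ?thesis .
  next
    case False
    have 1: "p - ff t \<le> p" using a by simp
    have "4 * s * d \<le> 4 * d * d" using False assms by (intro mult_mono) auto
    hence 2: "ff (t + d) - p \<le> 6 * d^2" using bp by (simp add: power2_eq_square)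
    have "(p - ff t) * (ff (t + d) - p) \<le> p * (6 * d^2)"
      using 1 2 pa b2 by (intro mult_mono) auto
    also have "\<dots> \<le> 16 * d^2 * p" using assms by simp
    finally show ?thesis .
  qed
qed

definition gg :: "nat \<Rightarrow> nat \<Rightarrow> real" where
  "gg m k = ff (real k / real m)"

definition kk :: "nat \<Rightarrow> real \<Rightarrow> nat" where
  "kk m p = min (nat \<lfloor>real m * finv p\<rfloor>) (m - 1)"

lemma gg_range: "k \<le> m \<Longrightarrow> 0 \<le> gg m k \<and> gg m k \<le> 1"
  unfolding gg_def by (intro conjI ff_range) (auto simp: divide_le_eq_1)

lemma grid:
  assumes m: "1 \<le> m" and p: "0 \<le> p" "p \<le> 1"
  shows "Suc (kk m p) \<le> m \<and> gg m (kk m p) \<le> p \<and> p \<le> gg m (Suc (kk m p)) \<and>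
         gg m (kk m p) < gg m (Suc (kk m p)) \<and>
         (p - gg m (kk m p)) * (gg m (Suc (kk m p)) - p) \<le> 32 / (real m)^2 * (p * (1 - p))"
proof -
  define u where "u = finv p"
  define k where "k = kk m p"
  define t where "t = real k / real m"
  define d where "d = 1 / real m"
  have u: "0 \<le> u" "u \<le> 1" "ff u = p" using finv[OF p] u_def by auto
  have mpos: "0 < real m" using m by simp
  have km: "Suc k \<le> m" using m unfolding k_def kk_def by auto
  have k1: "real k \<le> real m * u"
  proof -
    have "real (nat \<lfloor>real m * u\<rfloor>) \<le> real m * u"
      using u mpos by (simp add: of_nat_nat)
    moreover have "k \<le> nat \<lfloor>real m * u\<rfloor>" unfolding k_def kk_def u_def by simp
    ultimately show ?thesis by (meson of_nat_le_iff order_trans)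
  qed
  have k2: "real m * u \<le> real k + 1"
  proof (cases "nat \<lfloor>real m * u\<rfloor> \<le> m - 1")
    case True
    hence "k = nat \<lfloor>real m * u\<rfloor>" unfolding k_def kk_def u_def by simp
    moreover have "real m * u < real (nat \<lfloor>real m * u\<rfloor>) + 1"
      using u mpos by (simp add: of_nat_nat)
    ultimately show ?thesis by simp
  next
    case False
    hence "k = m - 1" unfolding k_def kk_def u_def by simp
    hence "real k + 1 = real m" using m by simp
    moreover have "real m * u \<le> real m" using u mpos by simp
    ultimately show ?thesis by simp
  qed
  have t1: "t \<le> u" using k1 mpos unfolding t_def by (simp add: divide_le_eq mult.commute)
  have t2: "u \<le> t + d" using k2 mpos unfolding t_def d_def
    by (simp add: add_divide_distrib[symmetric] le_divide_eq mult.commute)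
  have t0: "0 \<le> t" unfolding t_def by simp
  have td: "t + d \<le> 1" using km mpos unfolding t_def d_def
    by (simp add: add_divide_distrib[symmetric] divide_le_eq_1)
  have dpos: "0 < d" unfolding d_def using mpos by simp
  have ga: "gg m k = ff t" unfolding gg_def t_def by simp
  have gb: "gg m (Suc k) = ff (t + d)" unfolding gg_def t_def d_def
    by (rule arg_cong[where f=ff]) (simp add: add_divide_distrib)
  have o1: "ff t \<le> p" using ff_mono[of t u] t0 t1 u by simp
  have o2: "p \<le> ff (t + d)" using ff_mono[of u "t + d"] t2 td u by simp
  have o3: "ff t < ff (t + d)" using ff_strict[of t "t + d"] t0 td dpos by simp
  have d2: "d^2 = 1 / (real m)^2" unfolding d_def by (simp add: power_divide)
  have bound: "(p - ff t) * (ff (t + d) - p) \<le> 32 * d^2 * (p * (1 - p))"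
  proof (cases "p \<le> 1/2")
    case True
    define s where "s = sqrt (p/2)"
    have us: "u = s" unfolding u_def s_def finv_def using True by simp
    have s12: "s \<le> 1/2" unfolding s_def using True by (intro real_le_lsqrt) (auto simp: power2_eq_square)
    have ps: "p = 2 * s^2" unfolding s_def using p by simp
    have "(p - ff t) * (ff (t + d) - p) \<le> 16 * d^2 * p"
      using core_bound[of t s d p] t0 t1 t2 td s12 dpos ps us by simp
    also have "\<dots> \<le> 16 * d^2 * p * (2 * (1 - p))"
    proof -
      have "1 \<le> 2 * (1 - p)" using True by simp
      from mult_left_mono[OF this, of "16 * d^2 * p"] show ?thesis using p by simp
    qed
    finally show ?thesis by (simp add: algebra_simps)
  next
    case False
    define s where "s = sqrt ((1-p)/2)"
    have us: "u = 1 - s" unfolding u_def s_def finv_def using False by simp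
    have s12: "s \<le> 1/2" unfolding s_def using False p by (intro real_le_lsqrt) (auto simp: power2_eq_square)
    have ps: "1 - p = 2 * s^2" unfolding s_def using p by simp
    define t' where "t' = 1 - (t + d)"
    have e1: "ff t' = 1 - ff (t + d)" unfolding t'_def using ff_sym by simp
    have e2: "ff (t' + d) = 1 - ff t" unfolding t'_def using ff_sym[of t] by simp
    have "((1 - p) - ff t') * (ff (t' + d) - (1 - p)) \<le> 16 * d^2 * (1 - p)"
      using core_bound[of t' s d "1 - p"] t0 t1 t2 td s12 dpos ps us unfolding t'_def by simp
    hence "(p - ff t) * (ff (t + d) - p) \<le> 16 * d^2 * (1 - p)"
      unfolding e1 e2 by (simp add: algebra_simps)
    also have "\<dots> \<le> 16 * d^2 * (1 - p) * (2 * p)"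
    proof -
      have "1 \<le> 2 * p" using False by simp
      from mult_left_mono[OF this, of "16 * d^2 * (1 - p)"] show ?thesis using p by simp
    qed
    finally show ?thesis by (simp add: algebra_simps)
  qed
  show ?thesis using km o1 o2 o3 bound d2 unfolding k_def[symmetric] ga gb by simp
qed



definition phi :: "real \<Rightarrow> real \<Rightarrow> real" where
  "phi q t = t * ln (t / q) + (1 - t) * ln ((1 - t) / (1 - q))"

definition negH :: "real \<Rightarrow> real" where
  "negH t = t * ln t + (1 - t) * ln (1 - t)"

lemma xlnx_div: fixes t q :: real assumes "0 \<le> t" "0 < q" shows "t * ln (t / q) = t * ln t - t * ln q"
proof (cases "t = 0")
  case False
  then have "0 < t" using assms by auto
  then show ?thesis using assms by (simp add: ln_div algebra_simps)
qed simp

lemma phi_decomp: assumes "0 \<le> t" "t \<le> 1" "0 < q" "q < 1"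
  shows "phi q t = negH t - t * ln q - (1 - t) * ln (1 - q)"
  using xlnx_div[of t q] xlnx_div[of "1 - t" "1 - q"] assms unfolding phi_def negH_def by simp

lemma phi_chi: assumes "0 \<le> t" "t \<le> 1" "0 < p" "p < 1"
  shows "phi p t \<le> (t - p)^2 / (p * (1 - p))"
proof -
  have l1: "t * ln (t / p) \<le> t * (t / p - 1)"
  proof (cases "t = 0")
    case False
    then show ?thesis using assms by (intro mult_left_mono ln_le_minus_one) auto
  qed simp
  have l2: "(1 - t) * ln ((1 - t) / (1 - p)) \<le> (1 - t) * ((1 - t) / (1 - p) - 1)"
  proof (cases "t = 1")
    case False
    then show ?thesis using assms by (intro mult_left_mono ln_le_minus_one) auto
  qed simp
  have "t * (t / p - 1) + (1 - t) * ((1 - t) / (1 - p) - 1) = (t - p)^2 / (p * (1 - p))"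
    using assms by (simp add: field_simps power2_eq_square; simp add: algebra_simps)
  then show ?thesis using l1 l2 unfolding phi_def by simp
qed

lemma gap_bound:
  fixes a b p q lam C :: real
  assumes "0 \<le> a" "a \<le> p" "p \<le> b" "b \<le> 1" "a < b" "0 \<le> q" "q \<le> 1"
    "q = 0 \<longrightarrow> p = 0" "q = 1 \<longrightarrow> p = 1" "lam = (b - p) / (b - a)"
    "(p - a) * (b - p) \<le> C * (p * (1 - p))" "0 \<le> C"
  shows "lam * phi q a + (1 - lam) * phi q b - phi q p \<le> C"
proof (cases "p = a \<or> p = b")
  case True
  then show ?thesis using assms by auto
next
  case False
  then have ap: "a < p" "p < b" using assms by auto
  then have p01: "0 < p" "p < 1" using assms by auto
  then have q01: "0 < q" "q < 1" using assms by auto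
  have lp: "lam * a + (1 - lam) * b = p" using assms by (simp add: field_simps)
  have l01: "0 \<le> lam" "lam \<le> 1" using assms by auto
  have eq: "lam * phi q a + (1 - lam) * phi q b - phi q p = lam * phi p a + (1 - lam) * phi p b"
  proof -
    have "lam * phi q a + (1 - lam) * phi q b - phi q p
        = lam * negH a + (1 - lam) * negH b - negH p
          - (lam * a + (1 - lam) * b - p) * ln q
          - (lam * (1 - a) + (1 - lam) * (1 - b) - (1 - p)) * ln (1 - q)"
    proof -
      have d1: "phi q a = negH a - a * ln q - (1 - a) * ln (1 - q)"
        using phi_decomp[of a q] assms q01 by simp
      have d2: "phi q b = negH b - b * ln q - (1 - b) * ln (1 - q)"
        using phi_decomp[of b q] assms q01 by simp
      have d3: "phi q p = negH p - p * ln q - (1 - p) * ln (1 - q)"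
        using phi_decomp[of p q] p01 q01 by simp
      show ?thesis unfolding d1 d2 d3 by (simp add: algebra_simps)
    qed
    also have "\<dots> = lam * negH a + (1 - lam) * negH b - negH p" using lp by (simp add: algebra_simps)
    also have "\<dots> = lam * phi p a + (1 - lam) * phi p b"
    proof -
      have "lam * phi p a + (1 - lam) * phi p b = lam * negH a + (1 - lam) * negH b
          - (lam * a + (1 - lam) * b) * ln p
          - (lam * (1 - a) + (1 - lam) * (1 - b)) * ln (1 - p)"
      proof -
        have d1: "phi p a = negH a - a * ln p - (1 - a) * ln (1 - p)"
          using phi_decomp[of a p] assms p01 by simp
        have d2: "phi p b = negH b - b * ln p - (1 - b) * ln (1 - p)"
          using phi_decomp[of b p] assms p01 by simp
        show ?thesis unfolding d1 d2 by (simp add: algebra_simps)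
      qed
      also have "\<dots> = lam * negH a + (1 - lam) * negH b - negH p"
        using lp unfolding negH_def by (simp add: algebra_simps)
      finally show ?thesis by simp
    qed
    finally show ?thesis .
  qed
  have "lam * phi p a + (1 - lam) * phi p b
      \<le> lam * ((a - p)^2 / (p * (1 - p))) + (1 - lam) * ((b - p)^2 / (p * (1 - p)))"
    using phi_chi[of a p] phi_chi[of b p] assms p01 l01
    by (intro add_mono mult_left_mono) auto
  also have "\<dots> = (lam * (a - p)^2 + (1 - lam) * (b - p)^2) / (p * (1 - p))"
    by (simp add: add_divide_distrib)
  also have "lam * (a - p)^2 + (1 - lam) * (b - p)^2 = (p - a) * (b - p)"
  proof -
    have ba: "b - a \<noteq> 0" using assms by simp
    have m1: "lam * (b - a) = b - p" using assms ba by simp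
    have m2: "(1 - lam) * (b - a) = p - a" using m1 by (simp add: algebra_simps)
    have "(lam * (a - p)^2 + (1 - lam) * (b - p)^2) * (b - a)
        = (lam * (b - a)) * (a - p)^2 + ((1 - lam) * (b - a)) * (b - p)^2"
      by (simp add: algebra_simps)
    also have "\<dots> = ((p - a) * (b - p)) * (b - a)"
      unfolding m1 m2 by (simp add: power2_eq_square algebra_simps)
    finally show ?thesis using ba by simp
  qed
  also have "(p - a) * (b - p) / (p * (1 - p)) \<le> C"
    using assms p01 by (simp add: divide_le_eq)
  finally show ?thesis using eq by simp
qed



lemma pmf_map_sub:
  assumes "finite S" "S \<subseteq> f -` {a}" "f -` {a} \<inter> set_pmf M \<subseteq> S"
  shows "pmf (map_pmf f M) a = sum (pmf M) S"
proof -
  have e: "f -` {a} \<inter> set_pmf M = S \<inter> set_pmf M" using assms by blast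
  have "pmf (map_pmf f M) a = measure M (f -` {a})" by (rule pmf_map)
  also have "\<dots> = measure M (f -` {a} \<inter> set_pmf M)" by (rule measure_Int_set_pmf[symmetric])
  also have "\<dots> = measure M (S \<inter> set_pmf M)" using e by simp
  also have "\<dots> = measure M S" by (rule measure_Int_set_pmf)
  also have "\<dots> = sum (pmf M) S" using assms by (simp add: measure_measure_pmf_finite)
  finally show ?thesis .
qed

lemma pmf_map_img:
  assumes "finite A" "inj_on g A" "\<And>s. s \<in> A \<Longrightarrow> f (g s) = a"
     "\<And>s. s \<in> set_pmf M \<Longrightarrow> f s = a \<Longrightarrow> s \<in> g ` A"
  shows "pmf (map_pmf f M) a = (\<Sum>s\<in>A. pmf M (g s))"
proof -
  have "pmf (map_pmf f M) a = sum (pmf M) (g ` A)"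
    using assms by (intro pmf_map_sub) auto
  also have "\<dots> = (\<Sum>s\<in>A. pmf M (g s))" using assms by (simp add: sum.reindex)
  finally show ?thesis .
qed

lemma pmf_bind_fin:
  assumes "finite S" "set_pmf M \<subseteq> S"
  shows "pmf (bind_pmf M f) a = (\<Sum>y\<in>S. pmf M y * pmf (f y) a)"
proof -
  have "pmf (bind_pmf M f) a = (\<integral>x. pmf (f x) a \<partial>measure_pmf M)" by (rule pmf_bind)
  also have "\<dots> = (\<Sum>y\<in>S. pmf (f y) a * pmf M y)"
    using assms by (intro integral_measure_pmf_real) auto
  finally show ?thesis by (simp add: mult.commute)
qed

lemma pmf_bind_bern:
  assumes "0 \<le> l" "l \<le> 1"
  shows "pmf (bind_pmf (bernoulli_pmf l) f) a = l * pmf (f True) a + (1 - l) * pmf (f False) a"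
  using assms by (subst pmf_bind_fin[where S=UNIV]) (auto simp: UNIV_bool)


lemma pmf_map_bin:
  fixes x0 x1 :: 'x
  assumes "x0 \<noteq> x1" "\<And>x. x = x0 \<or> x = x1" "0 \<le> g" "g \<le> 1"
  shows "pmf (map_pmf (\<lambda>bb. (if bb then x0 else x1, z', y')) (bernoulli_pmf g)) (x, z, y) =
         (if z' = z \<and> y' = y then (if x = x0 then g else 1 - g) else 0)"
proof (cases "z' = z \<and> y' = y")
  case True
  show ?thesis
  proof (cases "x = x0")
    case True
    then show ?thesis using \<open>z' = z \<and> y' = y\<close> assms
      by (subst pmf_map_sub[where S="{True}"]) (auto split: if_splits)
  next
    case False
    then have "x = x1" using assms by blast
    then show ?thesis using \<open>z' = z \<and> y' = y\<close> assms False
      by (subst pmf_map_sub[where S="{False}"]) (auto split: if_splits)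
  qed
next
  case False
  then show ?thesis by (subst pmf_map_sub[where S="{}"]) auto
qed

lemma mi_ext:
  assumes "finite S" "set_pmf p \<subseteq> S"
  shows "mutual_info p = (\<Sum>ab\<in>S. pmf p ab * ln (pmf p ab /
            (pmf (map_pmf fst p) (fst ab) * pmf (map_pmf snd p) (snd ab))))"
  unfolding mutual_info_def using assms
  by (intro sum.mono_neutral_left) (auto simp: set_pmf_iff)

lemma term2:
  fixes c t q :: real
  assumes "0 \<le> c"
  shows "(t * c) * ln ((t * c) / (q * c)) + ((1 - t) * c) * ln (((1 - t) * c) / ((1 - q) * c)) = c * phi q t"
proof (cases "c = 0")
  case False
  have "(t * c) / (q * c) = t / q" "((1 - t) * c) / ((1 - q) * c) = (1 - t) / (1 - q)"
    using False by simp_all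
  then show ?thesis unfolding phi_def by (simp add: algebra_simps)
qed simp

lemma sum_two:
  fixes h :: "nat \<Rightarrow> real"
  assumes "Suc K < L"
  shows "(\<Sum>z<L. (if z = K then l else if z = Suc K then 1 - l else 0) * h z) = l * h K + (1 - l) * h (Suc K)"
proof -
  have "(\<Sum>z<L. (if z = K then l else if z = Suc K then 1 - l else 0) * h z)
      = (\<Sum>z<L. (if z = K then l * h K else 0) + (if z = Suc K then (1 - l) * h (Suc K) else 0))"
    by (intro sum.cong) auto
  also have "\<dots> = l * h K + (1 - l) * h (Suc K)" using assms by (simp add: sum.distrib)
  finally show ?thesis .
qed

lemma interp:
  fixes a b p :: real
  assumes "b - a \<noteq> 0"
  shows "((b - p) / (b - a)) * a + (1 - (b - p) / (b - a)) * b = p"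
proof -
  have gen: "\<And>l::real. l * a + (1 - l) * b = b - l * (b - a)" by (simp add: algebra_simps)
  have "((b - p) / (b - a)) * a + (1 - (b - p) / (b - a)) * b = b - ((b - p) / (b - a)) * (b - a)"
    by (rule gen)
  also have "\<dots> = p" using assms by simp
  finally show ?thesis .
qed

theorem theorem1:
  fixes P :: "('x::finite \<times> 'y::finite) pmf" and L :: nat
  assumes "CARD('x) = 2" and "L \<ge> 2"
  shows "\<exists>Q :: ('x \<times> nat \<times> 'y) pmf.
           set_pmf Q \<subseteq> UNIV \<times> {..<L} \<times> UNIV \<and>
           map_pmf (\<lambda>(x, z, y). (x, y)) Q = P \<and>
           markov_chain Q \<and>
           mutual_info (map_pmf (\<lambda>(x, z, y). (x, z)) Q) - mutual_info P \<le> 128 / (real L)\<^sup>2"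
proof -
  obtain x0 x1 :: 'x where x01: "x0 \<noteq> x1" and UX: "(UNIV :: 'x set) = {x0, x1}"
    using assms(1) unfolding card_2_iff by blast
  have xx: "\<And>x::'x. x = x0 \<or> x = x1" using UX by blast
  define m where "m = L - 1"
  have m1: "1 \<le> m" and Lm: "L = Suc m" using assms(2) unfolding m_def by auto
  define PY where "PY = (\<lambda>y. pmf (map_pmf snd P) y)"
  define PX where "PX = (\<lambda>x. pmf (map_pmf fst P) x)"
  define pp where "pp = (\<lambda>y. if PY y = 0 then 0 else pmf P (x0, y) / PY y)"
  define k where "k = (\<lambda>y. kk m (pp y))"
  define lam where "lam = (\<lambda>y. (gg m (Suc (k y)) - pp y) / (gg m (Suc (k y)) - gg m (k y)))"
  define ww where "ww = (\<lambda>y z. if z = k y then lam y else if z = Suc (k y) then 1 - lam y else 0)"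
  define rr where "rr = (\<lambda>z x. if x = x0 then gg m z else 1 - gg m z)"
  define inner where "inner = (\<lambda>y. bind_pmf (bernoulli_pmf (lam y)) (\<lambda>c.
      map_pmf (\<lambda>bb. (if bb then x0 else x1, if c then k y else Suc (k y), y))
        (bernoulli_pmf (gg m (if c then k y else Suc (k y))))))"
  define Q where "Q = bind_pmf (map_pmf snd P) inner"
  define q where "q = PX x0"

  have F1: "PY y = pmf P (x0, y) + pmf P (x1, y)" for y
  proof -
    have "PY y = (\<Sum>s\<in>{x0,x1}. pmf P (s, y))" unfolding PY_def
      using xx by (intro pmf_map_img) (auto simp: inj_on_def image_iff)
    then show ?thesis using x01 by simp
  qed
  have PYsum: "(\<Sum>y\<in>UNIV. PY y) = 1" unfolding PY_def by (rule sum_pmf_eq_1) auto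
  have PXsum: "PX x0 + PX x1 = 1"
  proof -
    have "(\<Sum>x\<in>UNIV. PX x) = 1" unfolding PX_def by (rule sum_pmf_eq_1) auto
    then show ?thesis unfolding UX using x01 by simp
  qed
  have PXle: "pmf P (x, y) \<le> PX x" for x y
  proof -
    have "pmf P (x, y) = measure P {(x, y)}" by (simp add: measure_pmf_single)
    also have "\<dots> \<le> measure P (fst -` {x})" by (intro measure_pmf.finite_measure_mono) auto
    also have "\<dots> = PX x" unfolding PX_def by (simp add: pmf_map)
    finally show ?thesis .
  qed
  have PY0: "0 \<le> PY y" for y unfolding PY_def by simp
  have pp01': "0 \<le> pp y \<and> pp y \<le> 1" for y
  proof (cases "PY y = 0")
    case True
    then show ?thesis unfolding pp_def by simp
  next
    case False
    have "0 < PY y" using PY0[of y] False by simp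
    moreover have "pmf P (x0, y) \<le> PY y" using F1[of y] by simp
    ultimately show ?thesis unfolding pp_def by (simp add: divide_le_eq_1)
  qed
  have pp01: "0 \<le> pp y" "pp y \<le> 1" for y using pp01'[of y] by auto
  have Px0: "pmf P (x0, y) = pp y * PY y" for y
    using F1[of y] unfolding pp_def by (auto simp: add_nonneg_eq_0_iff)
  have Px1: "pmf P (x1, y) = (1 - pp y) * PY y" for y
    using F1[of y] Px0[of y] by (simp add: algebra_simps)
  have G: "Suc (k y) \<le> m \<and> gg m (k y) \<le> pp y \<and> pp y \<le> gg m (Suc (k y)) \<and>
         gg m (k y) < gg m (Suc (k y)) \<and>
         (pp y - gg m (k y)) * (gg m (Suc (k y)) - pp y) \<le> 32 / (real m)^2 * (pp y * (1 - pp y))" for y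
    unfolding k_def using grid[OF m1 pp01(1) pp01(2)] by blast
  have ggr: "0 \<le> gg m z" "gg m z \<le> 1" if "z \<le> m" for z using gg_range[OF that] by auto
  have lam01: "0 \<le> lam y" "lam y \<le> 1" for y
    using G[of y] unfolding lam_def by (auto simp: divide_le_eq_1)
  have lamp: "lam y * gg m (k y) + (1 - lam y) * gg m (Suc (k y)) = pp y" for y
  proof -
    have "gg m (Suc (k y)) - gg m (k y) \<noteq> 0" using G[of y] by simp
    then show ?thesis unfolding lam_def by (intro interp) simp
  qed
  have kL: "Suc (k y) < L" for y using G[of y] Lm by simp

  have pmfQ: "pmf Q (x, z, y) = PY y * ww y z * rr z x" for x z y
  proof -
    have inn: "pmf (inner y') (x, z, y) = (if y' = y then ww y z * rr z x else 0)" for y'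
    proof -
      have "pmf (inner y') (x, z, y) =
         lam y' * (if k y' = z \<and> y' = y then (if x = x0 then gg m (k y') else 1 - gg m (k y')) else 0) +
         (1 - lam y') * (if Suc (k y') = z \<and> y' = y then (if x = x0 then gg m (Suc (k y')) else 1 - gg m (Suc (k y'))) else 0)"
        unfolding inner_def
        using lam01[of y'] ggr[of "k y'"] ggr[of "Suc (k y')"] G[of y'] x01 xx
        by (simp add: pmf_bind_bern pmf_map_bin)
      then show ?thesis unfolding ww_def rr_def by auto
    qed
    have "pmf Q (x, z, y) = (\<Sum>y'\<in>UNIV. PY y' * pmf (inner y') (x, z, y))"
      unfolding Q_def PY_def by (rule pmf_bind_fin) auto
    also have "\<dots> = (\<Sum>y'\<in>UNIV. if y' = y then PY y * (ww y z * rr z x) else 0)"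
      unfolding inn by (intro sum.cong) auto
    also have "\<dots> = PY y * ww y z * rr z x" by simp
    finally show ?thesis .
  qed
  have setQ: "set_pmf Q \<subseteq> UNIV \<times> {..<L} \<times> UNIV"
  proof
    fix s assume "s \<in> set_pmf Q"
    then obtain x z y where s: "s = (x, z, y)" and "pmf Q (x, z, y) \<noteq> 0"
      by (cases s) (auto simp: set_pmf_iff)
    then have "ww y z \<noteq> 0" unfolding pmfQ by auto
    then have "z \<le> Suc (k y)" unfolding ww_def by (auto split: if_splits)
    then show "s \<in> UNIV \<times> {..<L} \<times> UNIV" using s kL[of y] by auto
  qed
  have inQ: "z < L" if "(x, z, y) \<in> set_pmf Q" for x z y using setQ that by auto

  define QXZ where "QXZ = map_pmf (\<lambda>(x, z, y). (x, z)) Q"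
  have sumx: "rr z x0 + rr z x1 = 1" for z unfolding rr_def using x01 by simp
  have QXZv: "pmf QXZ (x, z) = (\<Sum>y\<in>UNIV. PY y * ww y z * rr z x)" for x z
  proof -
    have "pmf QXZ (x, z) = (\<Sum>y\<in>UNIV. pmf Q (x, z, y))" unfolding QXZ_def
      by (intro pmf_map_img) (auto simp: inj_on_def)
    then show ?thesis unfolding pmfQ .
  qed
  define QZ where "QZ = (\<lambda>z. \<Sum>y\<in>UNIV. PY y * ww y z)"
  have QXZv': "pmf QXZ (x, z) = rr z x * QZ z" for x z
    unfolding QXZv QZ_def by (simp add: sum_distrib_left algebra_simps)
  have QZv: "pmf (map_pmf snd QXZ) z = QZ z" for z
  proof -
    have "pmf (map_pmf snd QXZ) z = (\<Sum>x\<in>{x0,x1}. pmf QXZ (x, z))"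
      using xx by (intro pmf_map_img) (auto simp: inj_on_def image_iff)
    also have "\<dots> = (rr z x0 + rr z x1) * QZ z" using x01 unfolding QXZv' by (simp add: distrib_right)
    finally show ?thesis using sumx[of z] by simp
  qed
  have QZ': "map_pmf (\<lambda>(x, z, y). z) Q = map_pmf snd QXZ"
    unfolding QXZ_def map_pmf_comp by (rule map_pmf_cong) auto
  have QZYv: "pmf (map_pmf (\<lambda>(x, z, y). (z, y)) Q) (z, y) = PY y * ww y z" for z y
  proof -
    have "pmf (map_pmf (\<lambda>(x, z, y). (z, y)) Q) (z, y) = (\<Sum>x\<in>{x0,x1}. pmf Q (x, z, y))"
      using xx by (intro pmf_map_img) (auto simp: inj_on_def image_iff)
    also have "\<dots> = PY y * ww y z * (rr z x0 + rr z x1)" using x01 unfolding pmfQ by (simp add: distrib_left)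
    finally show ?thesis using sumx[of z] by simp
  qed
  have QXYv: "pmf (map_pmf (\<lambda>(x, z, y). (x, y)) Q) (x, y) = pmf P (x, y)" for x y
  proof -
    have "pmf (map_pmf (\<lambda>(x, z, y). (x, y)) Q) (x, y) = (\<Sum>z\<in>{..<L}. pmf Q (x, z, y))"
      using inQ by (intro pmf_map_img) (auto simp: inj_on_def image_iff)
    also have "\<dots> = PY y * (\<Sum>z<L. ww y z * rr z x)"
      unfolding pmfQ by (simp add: sum_distrib_left algebra_simps)
    also have "(\<Sum>z<L. ww y z * rr z x) = lam y * rr (k y) x + (1 - lam y) * rr (Suc (k y)) x"
      unfolding ww_def by (rule sum_two[OF kL])
    also have "PY y * (lam y * rr (k y) x + (1 - lam y) * rr (Suc (k y)) x) = pmf P (x, y)"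
    proof (cases "x = x0")
      case True
      then show ?thesis unfolding rr_def using lamp[of y] Px0[of y] by (simp add: algebra_simps)
    next
      case False
      then have "x = x1" using xx by blast
      then show ?thesis unfolding rr_def using False lamp[of y] Px1[of y] by (simp add: algebra_simps)
    qed
    finally show ?thesis .
  qed
  have marg: "map_pmf (\<lambda>(x, z, y). (x, y)) Q = P"
    by (rule pmf_eqI) (auto simp: QXYv)
  have markov: "markov_chain Q"
    unfolding markov_chain_def QZ' QZv QZYv
  proof (intro allI)
    fix x z y
    show "pmf Q (x, z, y) * QZ z = pmf (map_pmf (\<lambda>(x, z, y). (x, z)) Q) (x, z) * (PY y * ww y z)"
      using QXZv'[of x z] unfolding QXZ_def[symmetric] pmfQ by (simp add: algebra_simps)
  qed

  have PX1: "PX x1 = 1 - q" using PXsum unfolding q_def by simp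
  have IY: "mutual_info P = (\<Sum>y\<in>UNIV. PY y * phi q (pp y))"
  proof -
    have "mutual_info P = (\<Sum>ab\<in>UNIV. pmf P ab * ln (pmf P ab / (PX (fst ab) * PY (snd ab))))"
      unfolding PX_def PY_def by (rule mi_ext) auto
    also have "\<dots> = (\<Sum>x\<in>UNIV. \<Sum>y\<in>UNIV. pmf P (x, y) * ln (pmf P (x, y) / (PX x * PY y)))"
      unfolding sum.cartesian_product UNIV_Times_UNIV by (rule sum.cong) (auto simp: case_prod_beta)
    also have "\<dots> = (\<Sum>y\<in>UNIV. pmf P (x0, y) * ln (pmf P (x0, y) / (PX x0 * PY y)) +
                                pmf P (x1, y) * ln (pmf P (x1, y) / (PX x1 * PY y)))"
      unfolding UX using x01 by (simp add: sum.distrib)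
    also have "\<dots> = (\<Sum>y\<in>UNIV. PY y * phi q (pp y))"
      unfolding Px0 Px1 PX1 q_def[symmetric] using term2[OF PY0] by simp
    finally show ?thesis .
  qed
  have mfst: "map_pmf fst QXZ = map_pmf fst P"
  proof -
    have "map_pmf fst QXZ = map_pmf fst (map_pmf (\<lambda>(x, z, y). (x, y)) Q)"
      unfolding QXZ_def map_pmf_comp by (rule map_pmf_cong) auto
    then show ?thesis unfolding marg .
  qed
  have setQXZ: "set_pmf QXZ \<subseteq> UNIV \<times> {..<L}" unfolding QXZ_def using setQ by auto
  have IZ: "mutual_info QXZ = (\<Sum>z<L. QZ z * phi q (gg m z))"
  proof -
    have "mutual_info QXZ = (\<Sum>ab\<in>UNIV \<times> {..<L}. pmf QXZ ab * ln (pmf QXZ ab / (PX (fst ab) * QZ (snd ab))))"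
      unfolding PX_def QZv[symmetric] mfst[symmetric] by (rule mi_ext[OF _ setQXZ]) auto
    also have "\<dots> = (\<Sum>x\<in>UNIV. \<Sum>z<L. pmf QXZ (x, z) * ln (pmf QXZ (x, z) / (PX x * QZ z)))"
      unfolding sum.cartesian_product by (rule sum.cong) (auto simp: case_prod_beta)
    also have "\<dots> = (\<Sum>z<L. pmf QXZ (x0, z) * ln (pmf QXZ (x0, z) / (PX x0 * QZ z)) +
                                pmf QXZ (x1, z) * ln (pmf QXZ (x1, z) / (PX x1 * QZ z)))"
      unfolding UX using x01 by (simp add: sum.distrib)
    also have "\<dots> = (\<Sum>z<L. QZ z * phi q (gg m z))"
    proof (intro sum.cong refl)
      fix z
      have "0 \<le> QZ z" unfolding QZv[symmetric] by simp
      then show "pmf QXZ (x0, z) * ln (pmf QXZ (x0, z) / (PX x0 * QZ z)) +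
                 pmf QXZ (x1, z) * ln (pmf QXZ (x1, z) / (PX x1 * QZ z)) = QZ z * phi q (gg m z)"
        unfolding QXZv' PX1 q_def[symmetric] rr_def using x01 term2 by simp
    qed
    finally show ?thesis .
  qed
  have IZ2: "mutual_info QXZ = (\<Sum>y\<in>UNIV. PY y * (lam y * phi q (gg m (k y)) + (1 - lam y) * phi q (gg m (Suc (k y)))))"
  proof -
    have "mutual_info QXZ = (\<Sum>z<L. \<Sum>y\<in>UNIV. PY y * (ww y z * phi q (gg m z)))"
      unfolding IZ QZ_def sum_distrib_right by (simp add: mult.assoc)
    also have "\<dots> = (\<Sum>y\<in>UNIV. PY y * (\<Sum>z<L. ww y z * phi q (gg m z)))"
      by (subst sum.swap) (simp add: sum_distrib_left)
    also have "\<dots> = (\<Sum>y\<in>UNIV. PY y * (lam y * phi q (gg m (k y)) + (1 - lam y) * phi q (gg m (Suc (k y)))))"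
      unfolding ww_def by (simp add: sum_two[OF kL])
    finally show ?thesis .
  qed
  define C where "C = 32 / (real m)^2"
  have C0: "0 \<le> C" unfolding C_def by simp
  have gapy: "PY y * (lam y * phi q (gg m (k y)) + (1 - lam y) * phi q (gg m (Suc (k y))) - phi q (pp y)) \<le> PY y * C" for y
  proof (cases "PY y = 0")
    case False
    then have PYp: "0 < PY y" using PY0[of y] by simp
    have q01: "0 \<le> q" "q \<le> 1" using PXsum unfolding q_def PX_def by (auto simp: pmf_le_1)
    have c1: "q = 0 \<longrightarrow> pp y = 0"
      using PXle[of x0 y] Px0[of y] PYp pp01[of y] unfolding q_def
      by (auto simp: mult_le_0_iff)
    have c2: "q = 1 \<longrightarrow> pp y = 1"
      using PXle[of x1 y] Px1[of y] PYp pp01[of y] PX1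
      by (auto simp: mult_le_0_iff)
    have "lam y * phi q (gg m (k y)) + (1 - lam y) * phi q (gg m (Suc (k y))) - phi q (pp y) \<le> C"
      using G[of y] ggr[of "k y"] ggr[of "Suc (k y)"] q01 c1 c2 C0
      by (intro gap_bound[where lam = "lam y" and a = "gg m (k y)" and b = "gg m (Suc (k y))"])
         (auto simp: lam_def C_def)
    then show ?thesis using PYp by (intro mult_left_mono) auto
  qed simp
  have "mutual_info QXZ - mutual_info P
      = (\<Sum>y\<in>UNIV. PY y * (lam y * phi q (gg m (k y)) + (1 - lam y) * phi q (gg m (Suc (k y))) - phi q (pp y)))"
    unfolding IZ2 IY by (simp only: right_diff_distrib sum_subtractf)
  also have "\<dots> \<le> (\<Sum>y\<in>UNIV. PY y * C)" by (rule sum_mono) (rule gapy)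
  also have "\<dots> = C" using PYsum by (simp add: sum_distrib_right[symmetric])
  also have "C \<le> 128 / (real L)^2"
  proof -
    have "real L \<le> 2 * real m" using Lm m1 by simp
    then have "(real L)^2 \<le> (2 * real m)^2" by (intro power_mono) auto
    then have "128 / (2 * real m)^2 \<le> 128 / (real L)^2" using Lm m1
      by (intro divide_left_mono) auto
    then show ?thesis unfolding C_def by (simp add: power_mult_distrib)
  qed
  finally have "mutual_info QXZ - mutual_info P \<le> 128 / (real L)^2" .
  then show ?thesis using setQ marg markov unfolding QXZ_def by blast
qed

end
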